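(* For every integer $k\geq 6$, \[ H^+(k+1,k) = \{ 2^{k-1} + 2^{k-5} + 2^{k-6},\ 2^{k-1} + 2^{k-3},\ 2^{k-1} + 2^{k-2},\ 2^{k}\}.\]
   Context: Let $\mathbb{H}^n=\{0,1\}^n\subseteq\mathbb{R}^n$. For $n\geq k$, $H(n,k)=\{\,|\mathbb{H}^k\cap L^{-1}(\mathbb{H}^{n-k})| : L:\mathbb{R}^k\to\mathbb{R}^{n-k}\text{ linear}\,\}$ (equivalently, the set of possible sizes of intersections of a $k$-dimensional linear subspace of $\mathbb{R}^n$ with $\mathbb{H}^n$), and $H^+(n,k)=H(n,k)\setminus\{1,\dots,2^{k-1}\}$. *)

theory Defs
  imports Complex_Main
begin

text \<open>The discrete cube {0,1}^k inside R^k, with vectors of R^k represented as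
  functions nat => real that vanish at indices >= k.\<close>
definition cube :: "nat \<Rightarrow> (nat \<Rightarrow> real) set" where
  "cube k = {x. (\<forall>i<k. x i \<in> {0, 1}) \<and> (\<forall>i\<ge>k. x i = 0)}"

text \<open>A linear map L : R^k -> R^m is given by its matrix A (entries A i j, i<m, j<k);
  (L x)_i = sum_{j<k} A i j * x j.\<close>
definition H :: "nat \<Rightarrow> nat \<Rightarrow> nat set" where
  "H n k = {card {x \<in> cube k. \<forall>i<n - k. (\<Sum>j<k. A i j * x j) \<in> {0, 1}} | A :: nat \<Rightarrow> nat \<Rightarrow> real. True}"

definition Hplus :: "nat \<Rightarrow> nat \<Rightarrow> nat set" where
  "Hplus n k = H n k - {1..2^(k-1)}"

end

theory Submission
  imports Defs
begin

lemma ch_1_0: "(1::nat) choose 0 = 1" by (simp add: numeral_eq_Suc)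
lemma ch_1_1: "(1::nat) choose 1 = 1" by (simp add: numeral_eq_Suc)
lemma ch_2_0: "(2::nat) choose 0 = 1" by (simp add: numeral_eq_Suc)
lemma ch_2_1: "(2::nat) choose 1 = 2" by (simp add: numeral_eq_Suc)
lemma ch_2_2: "(2::nat) choose 2 = 1" by (simp add: numeral_eq_Suc)
lemma ch_3_0: "(3::nat) choose 0 = 1" by (simp add: numeral_eq_Suc)
lemma ch_3_1: "(3::nat) choose 1 = 3" by (simp add: numeral_eq_Suc)
lemma ch_3_2: "(3::nat) choose 2 = 3" by (simp add: numeral_eq_Suc)
lemma ch_3_3: "(3::nat) choose 3 = 1" by (simp add: numeral_eq_Suc)
lemma ch_4_0: "(4::nat) choose 0 = 1" by (simp add: numeral_eq_Suc)
lemma ch_4_1: "(4::nat) choose 1 = 4" by (simp add: numeral_eq_Suc)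
lemma ch_4_2: "(4::nat) choose 2 = 6" by (simp add: numeral_eq_Suc)
lemma ch_4_3: "(4::nat) choose 3 = 4" by (simp add: numeral_eq_Suc)
lemma ch_4_4: "(4::nat) choose 4 = 1" by (simp add: numeral_eq_Suc)
lemma ch_5_0: "(5::nat) choose 0 = 1" by (simp add: numeral_eq_Suc)
lemma ch_5_1: "(5::nat) choose 1 = 5" by (simp add: numeral_eq_Suc)
lemma ch_5_2: "(5::nat) choose 2 = 10" by (simp add: numeral_eq_Suc)
lemma ch_5_3: "(5::nat) choose 3 = 10" by (simp add: numeral_eq_Suc)
lemma ch_5_4: "(5::nat) choose 4 = 5" by (simp add: numeral_eq_Suc)
lemma ch_5_5: "(5::nat) choose 5 = 1" by (simp add: numeral_eq_Suc)
lemma ch_6_0: "(6::nat) choose 0 = 1" by (simp add: numeral_eq_Suc)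
lemma ch_6_1: "(6::nat) choose 1 = 6" by (simp add: numeral_eq_Suc)
lemma ch_6_2: "(6::nat) choose 2 = 15" by (simp add: numeral_eq_Suc)
lemma ch_6_3: "(6::nat) choose 3 = 20" by (simp add: numeral_eq_Suc)
lemma ch_6_4: "(6::nat) choose 4 = 15" by (simp add: numeral_eq_Suc)
lemma ch_6_5: "(6::nat) choose 5 = 6" by (simp add: numeral_eq_Suc)
lemma ch_6_6: "(6::nat) choose 6 = 1" by (simp add: numeral_eq_Suc)
lemma ch_7_0: "(7::nat) choose 0 = 1" by (simp add: numeral_eq_Suc)
lemma ch_7_1: "(7::nat) choose 1 = 7" by (simp add: numeral_eq_Suc)
lemma ch_7_2: "(7::nat) choose 2 = 21" by (simp add: numeral_eq_Suc)
lemma ch_7_3: "(7::nat) choose 3 = 35" by (simp add: numeral_eq_Suc)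
lemma ch_7_4: "(7::nat) choose 4 = 35" by (simp add: numeral_eq_Suc)
lemma ch_7_5: "(7::nat) choose 5 = 21" by (simp add: numeral_eq_Suc)
lemma ch_7_6: "(7::nat) choose 6 = 7" by (simp add: numeral_eq_Suc)
lemma ch_7_7: "(7::nat) choose 7 = 1" by (simp add: numeral_eq_Suc)
lemma ch_8_0: "(8::nat) choose 0 = 1" by (simp add: numeral_eq_Suc)
lemma ch_8_1: "(8::nat) choose 1 = 8" by (simp add: numeral_eq_Suc)
lemma ch_8_2: "(8::nat) choose 2 = 28" by (simp add: numeral_eq_Suc)
lemma ch_8_3: "(8::nat) choose 3 = 56" by (simp add: numeral_eq_Suc)
lemma ch_8_4: "(8::nat) choose 4 = 70" by (simp add: numeral_eq_Suc)
lemma ch_8_5: "(8::nat) choose 5 = 56" by (simp add: numeral_eq_Suc)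
lemma ch_8_6: "(8::nat) choose 6 = 28" by (simp add: numeral_eq_Suc)
lemma ch_8_7: "(8::nat) choose 7 = 8" by (simp add: numeral_eq_Suc)
lemma ch_8_8: "(8::nat) choose 8 = 1" by (simp add: numeral_eq_Suc)
lemma ch_9_0: "(9::nat) choose 0 = 1" by (simp add: numeral_eq_Suc)
lemma ch_9_1: "(9::nat) choose 1 = 9" by (simp add: numeral_eq_Suc)
lemma ch_9_2: "(9::nat) choose 2 = 36" by (simp add: numeral_eq_Suc)
lemma ch_9_3: "(9::nat) choose 3 = 84" by (simp add: numeral_eq_Suc)
lemma ch_9_4: "(9::nat) choose 4 = 126" by (simp add: numeral_eq_Suc)
lemma ch_9_5: "(9::nat) choose 5 = 126" by (simp add: numeral_eq_Suc)
lemma ch_9_6: "(9::nat) choose 6 = 84" by (simp add: numeral_eq_Suc)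
lemma ch_9_7: "(9::nat) choose 7 = 36" by (simp add: numeral_eq_Suc)
lemma ch_9_8: "(9::nat) choose 8 = 9" by (simp add: numeral_eq_Suc)
lemma ch_9_9: "(9::nat) choose 9 = 1" by (simp add: numeral_eq_Suc)
lemma two_S: "Suc (Suc 0) = 2" by simp
lemmas ch_table = ch_1_0 ch_1_1 ch_2_0 ch_2_1 ch_2_2 ch_3_0 ch_3_1 ch_3_2 ch_3_3 ch_4_0 ch_4_1 ch_4_2 ch_4_3 ch_4_4 ch_5_0 ch_5_1 ch_5_2 ch_5_3 ch_5_4 ch_5_5 ch_6_0 ch_6_1 ch_6_2 ch_6_3 ch_6_4 ch_6_5 ch_6_6 ch_7_0 ch_7_1 ch_7_2 ch_7_3 ch_7_4 ch_7_5 ch_7_6 ch_7_7 ch_8_0 ch_8_1 ch_8_2 ch_8_3 ch_8_4 ch_8_5 ch_8_6 ch_8_7 ch_8_8 ch_9_0 ch_9_1 ch_9_2 ch_9_3 ch_9_4 ch_9_5 ch_9_6 ch_9_7 ch_9_8 ch_9_9 two_S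
lemma upto9: "(m::nat) \<le> 9 \<Longrightarrow> m = 0 \<or> m = 1 \<or> m = 2 \<or> m = 3 \<or> m = 4 \<or> m = 5 \<or> m = 6 \<or> m = 7 \<or> m = 8 \<or> m = 9" by auto
lemma upto7: "(m::nat) \<le> 7 \<Longrightarrow> m = 0 \<or> m = 1 \<or> m = 2 \<or> m = 3 \<or> m = 4 \<or> m = 5 \<or> m = 6 \<or> m = 7" by auto

lemma fin_check:
  fixes m n :: nat
  assumes "m \<le> 7" "n \<le> m" "2 ^ m < 2 * (m + 1 choose (n + 1))"
  shows "64 * (m + 1 choose (n + 1)) = 2^m * 35 \<or> 64 * (m + 1 choose (n + 1)) = 2^m * 40 \<or>
         64 * (m + 1 choose (n + 1)) = 2^m * 48 \<or> 64 * (m + 1 choose (n + 1)) = 2^m * 64"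
proof -
  have n7: "n \<le> 7" using assms by simp
  show ?thesis
  using upto7[OF assms(1)] upto7[OF n7] assms(2,3)
  by (elim disjE) (simp_all add: ch_table)
qed
lemma big_choose: "n \<ge> 9 \<Longrightarrow> (n choose j) \<le> 2^(n-2)"
proof (induction n arbitrary: j rule: dec_induct)
  case base
  show ?case
  proof (cases "j \<le> 9")
    case True then show ?thesis
      using upto9[OF True] by (elim disjE) (simp_all add: ch_table)
  next
    case False then show ?thesis by (simp add: binomial_eq_0)
  qed
next
  case (step n)
  show ?case
  proof (cases j)
    case 0 then show ?thesis by simp
  next
    case (Suc i)
    have e: "Suc n - 2 = Suc (n - 2)" using step.hyps by simp
    have "Suc n choose j = (n choose i) + (n choose Suc i)" using Suc by simp
    also have "\<dots> \<le> 2^(n-2) + 2^(n-2)" using step.IH by (intro add_mono) 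
    also have "\<dots> = (2::nat)^(Suc n - 2)" unfolding e by simp
    finally show ?thesis .
  qed
qed

definition ind :: "nat set \<Rightarrow> nat \<Rightarrow> real" where
  "ind S i = (if i \<in> S then 1 else 0)"

lemma inj_ind: "inj ind"
proof (rule injI)
  fix S T assume "ind S = ind T"
  then have h: "\<And>i. ind S i = ind T i" by simp
  show "S = T"
  proof (rule set_eqI)
    fix i show "i \<in> S \<longleftrightarrow> i \<in> T" using h[of i] unfolding ind_def by (auto split: if_splits)
  qed
qed

lemma cube_eq: "cube k = ind ` Pow {..<k}"
proof
  show "cube k \<subseteq> ind ` Pow {..<k}"
  proof
    fix x assume x: "x \<in> cube k"
    have "x = ind {i. i < k \<and> x i = 1}"
    proof
      fix i show "x i = ind {i. i < k \<and> x i = 1} i"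
        using x unfolding cube_def ind_def by (cases "i < k") auto
    qed
    then show "x \<in> ind ` Pow {..<k}" by auto
  qed
next
  show "ind ` Pow {..<k} \<subseteq> cube k"
    unfolding cube_def ind_def by auto
qed

lemma sum_ind: "S \<subseteq> {..<k} \<Longrightarrow> (\<Sum>j<k. a j * ind S j) = sum a S"
proof -
  assume S: "S \<subseteq> {..<k}"
  have "(\<Sum>j<k. a j * ind S j) = (\<Sum>j<k. if j \<in> S then a j else 0)"
    unfolding ind_def by (intro sum.cong) auto
  also have "\<dots> = sum a ({..<k} \<inter> S)" by (simp add: sum.inter_restrict)
  also have "{..<k} \<inter> S = S" using S by auto
  finally show ?thesis .
qed

definition cnt :: "(nat \<Rightarrow> real) \<Rightarrow> nat \<Rightarrow> nat" where
  "cnt a k = card {S. S \<subseteq> {..<k} \<and> sum a S \<in> {0, 1}}"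

lemma transfer:
  "card {x \<in> cube k. \<forall>i<Suc k - k. (\<Sum>j<k. A i j * x j) \<in> {0, 1}} = cnt (A 0) k"
proof -
  have "{x \<in> cube k. \<forall>i<Suc k - k. (\<Sum>j<k. A i j * x j) \<in> {0, 1}}
      = ind ` {S. S \<subseteq> {..<k} \<and> sum (A 0) S \<in> {0, 1}}"
    unfolding cube_eq using sum_ind[of _ k "A 0"] by auto
  then show ?thesis unfolding cnt_def
    by (simp add: card_image inj_on_subset[OF inj_ind])
qed

lemma H_eq: "H (Suc k) k = range (\<lambda>a. cnt a k)"
proof -
  have "H (Suc k) k = {cnt (A 0) k | A :: nat \<Rightarrow> nat \<Rightarrow> real. True}"
    unfolding H_def using transfer by simp
  also have "\<dots> = range (\<lambda>a. cnt a k)"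
  proof
    show "{cnt (A 0) k | A :: nat \<Rightarrow> nat \<Rightarrow> real. True} \<subseteq> range (\<lambda>a. cnt a k)" by auto
    show "range (\<lambda>a. cnt a k) \<subseteq> {cnt (A 0) k | A :: nat \<Rightarrow> nat \<Rightarrow> real. True}"
    proof
      fix c assume "c \<in> range (\<lambda>a. cnt a k)"
      then obtain a where "c = cnt a k" by auto
      then show "c \<in> {cnt (A 0) k | A :: nat \<Rightarrow> nat \<Rightarrow> real. True}"
        by (intro CollectI exI[of _ "\<lambda>i. a"]) simp
    qed
  qed
  finally show ?thesis .
qed

lemma split_card:
  assumes "finite A" "x \<notin> A"
  shows "card {S. S \<subseteq> insert x A \<and> P S} =
         card {S. S \<subseteq> A \<and> P S} + card {S. S \<subseteq> A \<and> P (insert x S)}"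
proof -
  have eq: "{S. S \<subseteq> insert x A \<and> P S} =
        {S. S \<subseteq> A \<and> P S} \<union> insert x ` {S. S \<subseteq> A \<and> P (insert x S)}"
  proof
    show "{S. S \<subseteq> insert x A \<and> P S} \<subseteq>
        {S. S \<subseteq> A \<and> P S} \<union> insert x ` {S. S \<subseteq> A \<and> P (insert x S)}"
    proof
      fix S assume S: "S \<in> {S. S \<subseteq> insert x A \<and> P S}"
      show "S \<in> {S. S \<subseteq> A \<and> P S} \<union> insert x ` {S. S \<subseteq> A \<and> P (insert x S)}"
      proof (cases "x \<in> S")
        case True
        then have "S = insert x (S - {x})" by auto
        moreover have "S - {x} \<in> {S. S \<subseteq> A \<and> P (insert x S)}"
          using S True by (auto simp: insert_absorb)
        ultimately show ?thesis by blast
      next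
        case False then show ?thesis using S by auto
      qed
    qed
  qed auto
  have fin1: "finite {S. S \<subseteq> A \<and> P S}" using assms(1) by simp
  have fin2: "finite {S. S \<subseteq> A \<and> P (insert x S)}" using assms(1) by simp
  have disj: "{S. S \<subseteq> A \<and> P S} \<inter> insert x ` {S. S \<subseteq> A \<and> P (insert x S)} = {}"
    using assms(2) by auto
  have inj: "inj_on (insert x) {S. S \<subseteq> A \<and> P (insert x S)}"
  proof (rule inj_onI)
    fix S T assume "S \<in> {S. S \<subseteq> A \<and> P (insert x S)}" "T \<in> {S. S \<subseteq> A \<and> P (insert x S)}"
      "insert x S = insert x T"
    then show "S = T" using assms(2)
      by (metis (no_types, lifting) insert_ident mem_Collect_eq subset_eq)
  qed
  show ?thesis unfolding eq
    by (subst card_Un_disjoint) (use fin1 fin2 disj inj in \<open>auto simp: card_image\<close>)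
qed

lemma stepA:
  assumes "j < k" "a j \<notin> {-1, 0, 1}"
  shows "cnt a k \<le> 2^(k-1)"
proof -
  define A where "A = {..<k} - {j}"
  have kA: "{..<k} = insert j A" using assms(1) unfolding A_def by auto
  have fA: "finite A" "j \<notin> A" unfolding A_def by auto
  have cA: "card A = k - 1" unfolding A_def using assms(1) by simp
  let ?X = "{S. S \<subseteq> A \<and> sum a S \<in> {0,1}}"
  let ?Y = "{S. S \<subseteq> A \<and> sum a (insert j S) \<in> {0,1}}"
  have "cnt a k = card ?X + card ?Y" unfolding cnt_def kA by (rule split_card[OF fA])
  also have "\<dots> = card (?X \<union> ?Y)"
  proof (rule card_Un_disjoint[symmetric])
    show "finite ?X" "finite ?Y" using fA by auto
    show "?X \<inter> ?Y = {}"
    proof (rule ccontr)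
      assume "?X \<inter> ?Y \<noteq> {}"
      then obtain S where S: "S \<subseteq> A" "sum a S \<in> {0,1}" "sum a (insert j S) \<in> {0,1}" by auto
      have "finite S" "j \<notin> S" using S(1) fA finite_subset by auto
      then have "sum a (insert j S) = a j + sum a S" by simp
      then show False using S(2,3) assms(2) by auto
    qed
  qed
  also have "\<dots> \<le> card (Pow A)" by (rule card_mono) (use fA in auto)
  also have "\<dots> = 2^(k-1)" using fA cA by (simp add: card_Pow)
  finally show ?thesis .
qed
definition bin :: "nat \<Rightarrow> int \<Rightarrow> nat" where
  "bin m v = (if v < 0 then 0 else m choose nat v)"

lemma bin_pascal: "bin (Suc m) v = bin m v + bin m (v - 1)"
proof (cases "v \<le> 0")
  case True
  then show ?thesis unfolding bin_def by (cases "v = 0") auto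
next
  case False
  then have "nat v = Suc (nat (v - 1))" by simp
  then show ?thesis unfolding bin_def using False by simp
qed

definition cntv :: "(nat \<Rightarrow> real) \<Rightarrow> nat \<Rightarrow> real \<Rightarrow> nat" where
  "cntv a k v = card {S. S \<subseteq> {..<k} \<and> sum a S = v}"

definition cz :: "(nat \<Rightarrow> real) \<Rightarrow> real \<Rightarrow> nat \<Rightarrow> nat" where
  "cz a c k = card {j. j < k \<and> a j = c}"

lemma cz_Suc: "cz a c (Suc k) = cz a c k + (if a k = c then 1 else 0)"
proof -
  have fin: "finite {j. j < k \<and> a j = c}" by simp
  show ?thesis
  proof (cases "a k = c")
    case True
    then have "{j. j < Suc k \<and> a j = c} = insert k {j. j < k \<and> a j = c}" by (auto simp: less_Suc_eq)
    then show ?thesis unfolding cz_def using True fin by simp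
  next
    case False
    then have "{j. j < Suc k \<and> a j = c} = {j. j < k \<and> a j = c}" by (auto simp: less_Suc_eq)
    then show ?thesis unfolding cz_def using False by simp
  qed
qed

lemma cz_0: "cz a c 0 = 0" unfolding cz_def by simp

lemma cntv_Suc: "cntv a (Suc k) v = cntv a k v + cntv a k (v - a k)"
proof -
  have "cntv a (Suc k) v = card {S. S \<subseteq> insert k {..<k} \<and> sum a S = v}"
    unfolding cntv_def lessThan_Suc by simp
  also have "\<dots> = card {S. S \<subseteq> {..<k} \<and> sum a S = v} + card {S. S \<subseteq> {..<k} \<and> sum a (insert k S) = v}"
    by (rule split_card) auto
  also have "{S. S \<subseteq> {..<k} \<and> sum a (insert k S) = v} = {S. S \<subseteq> {..<k} \<and> sum a S = v - a k}"
  proof (rule Collect_cong)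
    fix S show "(S \<subseteq> {..<k} \<and> sum a (insert k S) = v) = (S \<subseteq> {..<k} \<and> sum a S = v - a k)"
    proof (cases "S \<subseteq> {..<k}")
      case True
      then have "finite S" "k \<notin> S" using finite_subset by auto
      then show ?thesis using True by auto
    qed simp
  qed
  finally show ?thesis unfolding cntv_def .
qed

lemma count_formula:
  assumes "\<forall>j<k. a j \<in> {-1, 0, 1}"
  shows "cntv a k (of_int v) = 2^(cz a 0 k) * bin (cz a 1 k + cz a (-1) k) (int (cz a (-1) k) + v)"
  using assms
proof (induction k arbitrary: v)
  case 0
  have "{S. S \<subseteq> {..<0} \<and> sum a S = of_int v} = (if v = 0 then {{}} else {})" by auto
  then have "cntv a 0 (of_int v) = (if v = 0 then 1 else 0)"
    unfolding cntv_def by simp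
  then show ?case by (simp add: cz_0 bin_def)
next
  case (Suc k)
  have IH: "\<And>v. cntv a k (of_int v) = 2^(cz a 0 k) * bin (cz a 1 k + cz a (-1) k) (int (cz a (-1) k) + v)"
    using Suc by simp
  have ak: "a k \<in> {-1, 0, 1}" using Suc.prems by simp
  let ?z = "cz a 0 k" and ?p = "cz a 1 k" and ?n = "cz a (-1) k"
  have "a k = 0 \<or> a k = 1 \<or> a k = -1" using ak by auto
  then show ?case
  proof (elim disjE)
    assume h: "a k = 0"
    have "cntv a (Suc k) (of_int v) = cntv a k (of_int v) + cntv a k (of_int v)"
      using cntv_Suc[of a k] h by simp
    then show ?thesis using h IH by (simp add: cz_Suc)
  next
    assume h: "a k = 1"
    have "cntv a (Suc k) (of_int v) = cntv a k (of_int v) + cntv a k (of_int (v - 1))"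
      using cntv_Suc[of a k] h by simp
    also have "\<dots> = 2^?z * (bin (?p + ?n) (int ?n + v) + bin (?p + ?n) (int ?n + v - 1))"
      by (simp only: IH) (simp add: algebra_simps)
    also have "\<dots> = 2^?z * bin (Suc (?p + ?n)) (int ?n + v)" by (simp add: bin_pascal)
    finally show ?thesis using h by (simp add: cz_Suc)
  next
    assume h: "a k = -1"
    have "cntv a (Suc k) (of_int v) = cntv a k (of_int v) + cntv a k (of_int (v + 1))"
      using cntv_Suc[of a k] h by simp
    also have "\<dots> = 2^?z * (bin (?p + ?n) (int ?n + v + 1) + bin (?p + ?n) (int ?n + v + 1 - 1))"
      by (simp only: IH) (simp add: algebra_simps)
    also have "\<dots> = 2^?z * bin (Suc (?p + ?n)) (int ?n + v + 1)" by (simp only: bin_pascal)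
    finally show ?thesis using h by (simp add: cz_Suc algebra_simps)
  qed
qed

lemma total:
  assumes "\<forall>j<k. a j \<in> {-1, 0, 1}"
  shows "cz a 0 k + cz a 1 k + cz a (-1) k = k"
  using assms
proof (induction k)
  case 0 then show ?case by (simp add: cz_0)
next
  case (Suc k)
  then have "a k = 0 \<or> a k = 1 \<or> a k = -1" by auto
  then show ?case using Suc by (auto simp: cz_Suc)
qed

lemma cnt_formula:
  assumes "\<forall>j<k. a j \<in> {-1, 0, 1}"
  shows "cnt a k = 2^(cz a 0 k) * (Suc (cz a 1 k + cz a (-1) k) choose Suc (cz a (-1) k))"
proof -
  let ?z = "cz a 0 k" and ?m = "cz a 1 k + cz a (-1) k" and ?n = "cz a (-1) k"
  have eq: "{S. S \<subseteq> {..<k} \<and> sum a S \<in> {0, 1}} =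
    {S. S \<subseteq> {..<k} \<and> sum a S = 0} \<union> {S. S \<subseteq> {..<k} \<and> sum a S = 1}" by auto
  have "cnt a k = cntv a k 0 + cntv a k 1"
    unfolding cnt_def cntv_def eq by (rule card_Un_disjoint) auto
  also have "\<dots> = cntv a k (of_int 0) + cntv a k (of_int 1)" by simp
  also have "\<dots> = 2^?z * (bin ?m (int ?n + 1) + bin ?m (int ?n + 1 - 1))"
    unfolding count_formula[OF assms] by (simp add: algebra_simps)
  also have "\<dots> = 2^?z * bin (Suc ?m) (int ?n + 1)" by (simp only: bin_pascal)
  also have "bin (Suc ?m) (int ?n + 1) = (Suc ?m choose Suc ?n)"
    unfolding bin_def by (simp add: nat_add_distrib)
  finally show ?thesis .
qed

lemma cnt_mult:
  assumes "\<forall>j<k. a j \<in> {-1, 0, 1}"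
  shows "cnt a k * 2^(cz a 1 k + cz a (-1) k) = 2^k * (Suc (cz a 1 k + cz a (-1) k) choose Suc (cz a (-1) k))"
proof -
  have "2^k = (2::nat)^(cz a 0 k) * 2^(cz a 1 k + cz a (-1) k)"
    using total[OF assms] by (metis add.assoc power_add)
  then show ?thesis using cnt_formula[OF assms] by (simp add: algebra_simps)
qed

lemma cnt_from_mult:
  fixes cn C m k0 c :: nat
  assumes "cn * 2^m = 2^(k0 + 6) * C" "64 * C = 2^m * c"
  shows "cn = 2^k0 * c"
proof -
  have "cn * 2^m = 2^k0 * (64 * C)" using assms(1) by (simp add: power_add algebra_simps)
  also have "\<dots> = (2^k0 * c) * 2^m" using assms(2) by (simp add: algebra_simps)
  finally show ?thesis by simp
qed
definition mk :: "nat \<Rightarrow> nat \<Rightarrow> nat \<Rightarrow> real" where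
  "mk p n j = (if j < p then 1 else if j < p + n then -1 else 0)"

lemma mk_props:
  assumes "p + n \<le> k"
  shows "\<forall>j<k. mk p n j \<in> {-1, 0, 1}" "cz (mk p n) 1 k = p" "cz (mk p n) (-1) k = n"
proof -
  show "\<forall>j<k. mk p n j \<in> {-1, 0, 1}" unfolding mk_def by auto
  have "{j. j < k \<and> mk p n j = 1} = {..<p}" using assms unfolding mk_def by auto
  then show "cz (mk p n) 1 k = p" unfolding cz_def by simp
  have "{j. j < k \<and> mk p n j = -1} = {p..<p+n}" using assms unfolding mk_def by auto
  then show "cz (mk p n) (-1) k = n" unfolding cz_def by simp
qed

lemma cnt_pos: "cnt a k \<ge> 1"
proof -
  have "{} \<in> {S. S \<subseteq> {..<k} \<and> sum a S \<in> {0, 1}}" by simp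
  moreover have "finite {S. S \<subseteq> {..<k} \<and> sum a S \<in> {0, 1}}" by simp
  ultimately have "card {S. S \<subseteq> {..<k} \<and> sum a S \<in> {0, 1}} > 0"
    using card_gt_0_iff by blast
  then show ?thesis unfolding cnt_def by simp
qed

lemma achieve:
  assumes "p + n \<le> k0 + 6" "64 * (Suc (p + n) choose Suc n) = 2^(p+n) * c"
  shows "2^k0 * c \<in> range (\<lambda>a. cnt a (k0 + 6))"
proof -
  note mp = mk_props[OF assms(1)]
  have "cnt (mk p n) (k0 + 6) * 2^(p + n) = 2^(k0+6) * (Suc (p + n) choose Suc n)"
    using cnt_mult[OF mp(1)] mp(2,3) by simp
  then have "cnt (mk p n) (k0 + 6) = 2^k0 * c" using assms(2) by (rule cnt_from_mult)
  then show ?thesis by (metis rangeI)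
qed

theorem corollary3p3:
  fixes k :: nat
  assumes "k \<ge> 6"
  shows "Hplus (k + 1) k =
    {2^(k-1) + 2^(k-5) + 2^(k-6), 2^(k-1) + 2^(k-3), 2^(k-1) + 2^(k-2), 2^k}"
proof -
  obtain k0 where k: "k = k0 + 6" using assms by (metis add.commute le_Suc_ex)
  have S: "{2^(k-1) + 2^(k-5) + 2^(k-6), 2^(k-1) + 2^(k-3), 2^(k-1) + 2^(k-2), 2^k}
      = {2^k0 * 35, 2^k0 * 40, 2^k0 * 48, 2^k0 * (64::nat)}"
    unfolding k by (simp add: power_add algebra_simps)
  have Hp: "Hplus (k + 1) k = range (\<lambda>a. cnt a k) - {1..2^(k-1)}"
    unfolding Hplus_def using H_eq[of k] by simp
  have k1: "(2::nat)^(k-1) * 2 = 2^k" using assms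
    by (metis Suc_diff_1 less_le_trans power_Suc2 zero_less_numeral zero_less_Suc numeral_le_iff le_eq_less_or_eq less_numeral_extra(1) le_numeral_extra(4) not_less_eq_eq numeral_One less_one) 
  show ?thesis unfolding S Hp
  proof
    show "range (\<lambda>a. cnt a k) - {1..2 ^ (k - 1)} \<subseteq> {2^k0 * 35, 2^k0 * 40, 2^k0 * 48, 2^k0 * 64}"
    proof
      fix c assume "c \<in> range (\<lambda>a. cnt a k) - {1..2 ^ (k - 1)}"
      then obtain a where c: "c = cnt a k" "c \<notin> {1..2 ^ (k - 1)}" by auto
      then have big: "c > 2^(k-1)" using cnt_pos[of a k] by auto
      have all: "\<forall>j<k. a j \<in> {-1, 0, 1}"
        using stepA[of _ k a] big c(1) by (meson leD)
      define m where "m = cz a 1 k + cz a (-1) k"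
      define n where "n = cz a (-1) k"
      define C where "C = Suc m choose Suc n"
      have nm: "n \<le> m" unfolding m_def n_def by simp
      have cm: "c * 2^m = 2^k * C" using cnt_mult[OF all] c(1) unfolding m_def n_def C_def by simp
      have "2^(k-1) * 2^m < c * 2^m" using big by simp
      then have A: "2^(k-1) * 2^m * 2 < 2^k * C * 2" using cm by simp
      have e1: "(2::nat)^(k-1) * 2^m * 2 = 2^k * 2^m"
        using k1 by (metis mult.assoc mult.commute)
      have e2: "(2::nat)^k * C * 2 = 2^k * (2 * C)" by simp
      have "2^k * 2^m < 2^k * (2 * C)" using A unfolding e1 e2 .
      then have lt: "2^m < 2 * C" using mult_less_cancel1 by blast
      have m7: "m \<le> 7"
      proof (rule ccontr)
        assume "\<not> m \<le> 7"
        then have "Suc m \<ge> 9" by simp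
        then have "C \<le> 2^(Suc m - 2)" unfolding C_def by (rule big_choose)
        moreover have "Suc m - 2 = m - 1" by simp
        ultimately have "2 * C \<le> 2 * 2^(m-1)" by simp
        also have "\<dots> = 2^m" using \<open>\<not> m \<le> 7\<close> by (metis Suc_diff_1 not_le not_less_zero less_nat_zero_code neq0_conv power_Suc)
        finally show False using lt by simp
      qed
      have lt': "2 ^ m < 2 * (m + 1 choose (n + 1))" using lt unfolding C_def by simp
      have cm': "c * 2^m = 2^(k0+6) * (m + 1 choose (n + 1))" using cm k unfolding C_def by simp
      from fin_check[OF m7 nm lt'] show "c \<in> {2^k0 * 35, 2^k0 * 40, 2^k0 * 48, 2^k0 * 64}"
        using cnt_from_mult[OF cm'] by blast
    qed
  next
    show "{2^k0 * 35, 2^k0 * 40, 2^k0 * 48, 2^k0 * 64} \<subseteq> range (\<lambda>a. cnt a k) - {1..2 ^ (k - 1)}"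
    proof -
      have r: "{2^k0 * 35, 2^k0 * 40, 2^k0 * 48, 2^k0 * (64::nat)} \<subseteq> range (\<lambda>a. cnt a k)"
        unfolding k
        using achieve[of 3 3 k0 35] achieve[of 2 2 k0 40] achieve[of 2 0 k0 48] achieve[of 0 0 k0 64]
        by (simp add: ch_table)
      have "2^(k-1) = (2::nat)^k0 * 32" unfolding k by (simp add: power_add)
      then have "{2^k0 * 35, 2^k0 * 40, 2^k0 * 48, 2^k0 * (64::nat)} \<inter> {1..2 ^ (k - 1)} = {}" by auto
      with r show ?thesis by blast
    qed
  qed
qed

end
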